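(* There is no binary self-orthogonal $[54,6,26]$ code.
   Context: A binary linear code $C$ is self-orthogonal if $C\subseteq C^\perp$. *)

theory Defs
  imports "HOL-Analysis.Analysis" "HOL-Library.Z2" "HOL-Library.Numeral_Type"
begin

text \<open>Binary vectors of length n are elements of bit ^ 'n (with CARD('n) = n);
  bit is the two-element field GF(2). A binary linear code is a linear subspace.\<close>

definition binary_linear_code :: "(bit ^ 'n) set \<Rightarrow> bool" where
  "binary_linear_code C \<longleftrightarrow> vec.subspace C"

definition code_length :: "(bit ^ 'n) set \<Rightarrow> nat" where
  "code_length C = CARD('n)"

definition code_dimension :: "(bit ^ 'n) set \<Rightarrow> nat" where
  "code_dimension C = vec.dim C"

definition hamming_dist :: "bit ^ 'n \<Rightarrow> bit ^ 'n \<Rightarrow> nat" where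
  "hamming_dist x y = card {i. x $ i \<noteq> y $ i}"

definition min_distance :: "(bit ^ 'n) set \<Rightarrow> nat" where
  "min_distance C = Min {hamming_dist x y | x y. x \<in> C \<and> y \<in> C \<and> x \<noteq> y}"

definition dot :: "bit ^ 'n \<Rightarrow> bit ^ 'n \<Rightarrow> bit" where
  "dot x y = (\<Sum>i\<in>UNIV. x $ i * y $ i)"

definition dual_code :: "(bit ^ 'n) set \<Rightarrow> (bit ^ 'n) set" where
  "dual_code C = {y. \<forall>x\<in>C. dot x y = 0}"

definition self_orthogonal :: "(bit ^ 'n) set \<Rightarrow> bool" where
  "self_orthogonal C \<longleftrightarrow> C \<subseteq> dual_code C"

end

theory Submission
  imports Defs
begin

definition wt :: "bit ^ 'n \<Rightarrow> nat" where "wt x = card {i. x $ i = 1}"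

lemma card_sum_if: "card {i::'n::finite. P i} = (\<Sum>i\<in>UNIV. if P i then 1 else 0)"
  by (simp add: sum.If_cases)

lemma bit_sum_if: "(\<Sum>i\<in>(UNIV::'n::finite set). if P i then 1 else 0) = (of_nat (card {i. P i}) :: bit)"
  by (simp add: sum.If_cases)

lemma of_nat_bit0: "(of_nat n :: bit) = 0 \<longleftrightarrow> even n"
  by (induction n) auto

lemma wt_add: "wt (x + y) + 2 * card {i. x $ i = 1 \<and> y $ i = 1} = wt x + wt y"
proof -
  have "\<And>i. (if (x+y) $ i = 1 then 1 else 0) + 2 * (if x $ i = 1 \<and> y $ i = 1 then 1 else 0)
     = (if x $ i = 1 then 1 else 0) + (if y $ i = (1::bit) then 1 else (0::nat))"
    by (cases "x $ i"; cases "y $ i") auto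
  hence "(\<Sum>i\<in>UNIV. (if (x+y) $ i = 1 then 1 else 0) + 2 * (if x $ i = 1 \<and> y $ i = 1 then 1 else 0))
     = (\<Sum>i\<in>UNIV. (if x $ i = 1 then 1 else 0) + (if y $ i = (1::bit) then 1 else (0::nat)))" by simp
  thus ?thesis unfolding wt_def card_sum_if[where P="\<lambda>i. _ $ i = 1"] card_sum_if[where P="\<lambda>i. x $ i = 1 \<and> y $ i = 1"]
    by (simp add: sum.distrib sum_distrib_left)
qed

lemma dot_card: "dot x y = of_nat (card {i. x $ i = 1 \<and> y $ i = 1})"
proof -
  have "\<And>i. x $ i * y $ i = (if x $ i = 1 \<and> y $ i = 1 then 1 else 0)"
    by (cases "x $ i"; cases "y $ i") auto
  thus ?thesis unfolding dot_def by (simp add: bit_sum_if)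
qed


lemma finite_bit_UNIV: "finite (UNIV :: bit set)"
proof -
  have "UNIV = {0, 1::bit}" using bit_not_zero_iff by blast
  thus ?thesis by (metis finite.emptyI finite.insertI)
qed
lemma finite_bitvec: "finite (A :: (bit ^ 'n) set)"
proof -
  have "finite (PiE (UNIV::'n set) (\<lambda>_. UNIV :: bit set))"
    by (rule finite_PiE) (simp_all add: finite_bit_UNIV)
  hence f: "finite (UNIV :: ('n \<Rightarrow> bit) set)" by simp
  have "(UNIV :: (bit^'n) set) = range vec_lambda" by (metis surj_def vec_lambda_eta)
  hence "finite (UNIV :: (bit^'n) set)" using finite_imageI[OF f, of vec_lambda] by simp
  thus ?thesis by (rule finite_subset[OF subset_UNIV])
qed


lemma add_self_vec: "(x :: bit ^ 'n) + x = 0"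
  by (simp add: vec_eq_iff)

lemma card_ge_64:
  fixes C :: "(bit ^ 'n) set"
  assumes "vec.subspace C" "vec.dim C = 6"
  shows "64 \<le> card C"
proof -
  obtain B where B: "B \<subseteq> C" "vec.independent B" "C \<subseteq> vec.span B" "card B = vec.dim C"
    using vec.basis_exists by blast
  have fB: "finite B" using B(2) vec.independent_explicit by blast
  have inj: "inj_on (\<lambda>S. \<Sum>v\<in>S. v) (Pow B)"
  proof (rule inj_onI)
    fix S T assume S: "S \<in> Pow B" and T: "T \<in> Pow B" and eq: "(\<Sum>v\<in>S. v) = (\<Sum>v\<in>T. v)"
    define c where "c v = (if v \<in> S then 1 else 0) + (if v \<in> T then 1 else (0::bit))" for v
    have h: "\<And>U. U \<subseteq> B \<Longrightarrow> (\<Sum>v\<in>B. (if v \<in> U then 1 else (0::bit)) *s v) = (\<Sum>v\<in>U. v)"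
    proof -
      fix U assume "U \<subseteq> B"
      have "(\<Sum>v\<in>B. (if v \<in> U then 1 else (0::bit)) *s v) = (\<Sum>v\<in>B. if v \<in> U then v else 0)"
        by (rule sum.cong) auto
      also have "\<dots> = (\<Sum>v\<in>B \<inter> U. v)" using fB by (simp add: sum.inter_restrict)
      also have "B \<inter> U = U" using \<open>U \<subseteq> B\<close> by blast
      finally show "(\<Sum>v\<in>B. (if v \<in> U then 1 else (0::bit)) *s v) = (\<Sum>v\<in>U. v)" .
    qed
    have "(\<Sum>v\<in>B. c v *s v) = (\<Sum>v\<in>B. (if v \<in> S then 1 else (0::bit)) *s v) + (\<Sum>v\<in>B. (if v \<in> T then 1 else (0::bit)) *s v)"
      by (simp only: c_def vec.scale_left_distrib sum.distrib)
    also have "\<dots> = (\<Sum>v\<in>S. v) + (\<Sum>v\<in>T. v)" using h[of S] h[of T] S T by simp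
    also have "\<dots> = 0" by (simp only: eq add_self_vec)
    finally have "\<forall>v\<in>B. c v = 0" using B(2) vec.independent_explicit by blast
    hence cz: "\<forall>v\<in>B. c v = 0" .
    have "(v \<in> S) = (v \<in> T)" if "v \<in> B" for v
      using cz that unfolding c_def by (cases "v \<in> S"; cases "v \<in> T") auto
    hence "\<forall>v\<in>B. (v \<in> S) = (v \<in> T)" by blast
    thus "S = T" using S T by blast
  qed
  have img: "(\<lambda>S. \<Sum>v\<in>S. v) ` Pow B \<subseteq> C"
    using B(1) assms(1) by (auto intro!: vec.subspace_sum)
  have "finite C" by (rule finite_bitvec)
  have "card (Pow B) \<le> card C" using card_inj_on_le[OF inj img \<open>finite C\<close>] .
  moreover have "card (Pow B) = 64" using fB B(4) assms(2) by (simp add: card_Pow)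
  ultimately show ?thesis by simp
qed

lemma sum_wt_bound:
  fixes D :: "(bit ^ 'n) set"
  assumes add: "\<And>x y. x \<in> D \<Longrightarrow> y \<in> D \<Longrightarrow> x + y \<in> D"
  shows "2 * (\<Sum>x\<in>D. wt x) \<le> CARD('n) * card D"
proof -
  have fD: "finite D" by (rule finite_bitvec)
  have "(\<Sum>x\<in>D. wt x) = (\<Sum>x\<in>D. \<Sum>i\<in>UNIV. if x $ i = 1 then 1 else 0)"
    unfolding wt_def card_sum_if[where P="\<lambda>i. _ $ i = 1"] by simp
  also have "\<dots> = (\<Sum>i\<in>UNIV. \<Sum>x\<in>D. if x $ i = 1 then 1 else 0)" by (rule sum.swap)
  also have "\<dots> = (\<Sum>i\<in>UNIV. card {x\<in>D. x $ i = 1})"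
    using fD by (simp add: sum.If_cases Int_def conj_commute)
  finally have eq: "(\<Sum>x\<in>D. wt x) = (\<Sum>i\<in>UNIV. card {x\<in>D. x $ i = 1})" .
  have each: "2 * card {x\<in>D. x $ i = 1} \<le> card D" for i
  proof (cases "\<exists>a\<in>D. a $ i = 1")
    case True
    then obtain a where a: "a \<in> D" "a $ i = 1" by blast
    have "inj_on (\<lambda>x. x + a) {x\<in>D. x $ i = 1}" by (rule inj_onI) simp
    moreover have "(\<lambda>x. x + a) ` {x\<in>D. x $ i = 1} \<subseteq> {x\<in>D. x $ i \<noteq> 1}"
      using a add by auto
    ultimately have le: "card {x\<in>D. x $ i = 1} \<le> card {x\<in>D. x $ i \<noteq> 1}"
      using card_inj_on_le fD by (metis (no_types, lifting) finite_subset mem_Collect_eq subsetI)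
    have "card D = card ({x\<in>D. x $ i = 1} \<union> {x\<in>D. x $ i \<noteq> 1})"
      by (rule arg_cong[where f=card]) auto
    also have "\<dots> = card {x\<in>D. x $ i = 1} + card {x\<in>D. x $ i \<noteq> 1}"
      by (rule card_Un_disjoint) (auto simp: finite_bitvec)
    finally have "card {x\<in>D. x $ i = 1} + card {x\<in>D. x $ i \<noteq> 1} = card D" by simp
    thus ?thesis using le by simp
  next
    case False
    hence "{x\<in>D. x $ i = 1} = {}" by blast
    thus ?thesis by (simp only: card.empty mult_0_right le0)
  qed
  have "2 * (\<Sum>x\<in>D. wt x) = (\<Sum>i\<in>UNIV. 2 * card {x\<in>D. x $ i = 1})"
    by (simp add: eq sum_distrib_left)
  also have "\<dots> \<le> (\<Sum>i\<in>(UNIV::'n set). card D)" by (rule sum_mono) (rule each)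
  also have "\<dots> = CARD('n) * card D" by simp
  finally show ?thesis .
qed


lemma ar1: "(w::nat) + 2*(2*k) = a + b \<Longrightarrow> 4 dvd a \<Longrightarrow> 4 dvd b \<Longrightarrow> 4 dvd w" by presburger
lemma ar2: "(w::nat) + 2*(2*k) = a + b \<Longrightarrow> \<not> 4 dvd a \<Longrightarrow> \<not> 4 dvd b \<Longrightarrow> even a \<Longrightarrow> even b \<Longrightarrow> 4 dvd w" by presburger
lemma ar3: "26 \<le> (w::nat) \<Longrightarrow> 4 dvd w \<Longrightarrow> 28 \<le> w" by presburger

theorem corollary6p6:
  shows "\<not> (\<exists>C :: (bit ^ 54) set. binary_linear_code C \<and> code_length C = 54 \<and>
            code_dimension C = 6 \<and> min_distance C = 26 \<and> self_orthogonal C)"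
proof
  assume "\<exists>C :: (bit ^ 54) set. binary_linear_code C \<and> code_length C = 54 \<and>
            code_dimension C = 6 \<and> min_distance C = 26 \<and> self_orthogonal C"
  then obtain C :: "(bit ^ 54) set" where sub: "vec.subspace C" and dim: "vec.dim C = 6"
    and md: "min_distance C = 26" and so: "self_orthogonal C"
    unfolding binary_linear_code_def code_dimension_def by blast
  have c64: "64 \<le> card C" using card_ge_64[OF sub dim] .
  have z: "0 \<in> C" using sub vec.subspace_0 by blast
  have addC: "x + y \<in> C" if "x \<in> C" "y \<in> C" for x y using sub that vec.subspace_add by blast
  have orth: "even (card {i. x $ i = 1 \<and> y $ i = 1})" if "x \<in> C" "y \<in> C" for x y
  proof -
    have "dot x y = 0" using so that unfolding self_orthogonal_def dual_code_def by blast
    thus ?thesis by (simp add: dot_card of_nat_bit0)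
  qed
  have ev: "even (wt x)" if "x \<in> C" for x using orth[OF that that] unfolding wt_def by simp
  have w26: "26 \<le> wt x" if "x \<in> C" "x \<noteq> 0" for x
  proof -
    let ?S = "{hamming_dist x y | x y. x \<in> C \<and> y \<in> C \<and> x \<noteq> y}"
    have "?S \<subseteq> (\<lambda>(x,y). hamming_dist x y) ` (C \<times> C)" by auto
    hence "finite ?S" by (rule finite_subset) (simp add: finite_bitvec)
    moreover have "hamming_dist x 0 \<in> ?S" using that z by blast
    ultimately have "Min ?S \<le> hamming_dist x 0" by (rule Min_le)
    moreover have "hamming_dist x 0 = wt x" unfolding hamming_dist_def wt_def by simp
    ultimately show ?thesis using md unfolding min_distance_def by simp
  qed
  define D where "D = {x\<in>C. 4 dvd wt x}"
  have wadd: "wt (x + y) + 2 * card {i. x $ i = 1 \<and> y $ i = 1} = wt x + wt y" for x y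
    by (rule wt_add)
  have addD: "x + y \<in> D" if "x \<in> D" "y \<in> D" for x y
  proof -
    have xy: "x \<in> C" "y \<in> C" "4 dvd wt x" "4 dvd wt y" using that unfolding D_def by auto
    obtain k where "card {i. x $ i = 1 \<and> y $ i = 1} = 2 * k" using orth[OF xy(1,2)] by blast
    hence "wt (x + y) + 2 * (2 * k) = wt x + wt y" using wadd[of x y] by simp
    hence "4 dvd wt (x + y)" using xy(3,4) by (rule ar1)
    thus ?thesis using addC xy unfolding D_def by blast
  qed
  have cardCD: "card C \<le> 2 * card D"
  proof (cases "C - D = {}")
    case True
    hence "C = D" unfolding D_def by blast
    thus ?thesis by simp
  next
    case False
    then obtain a where a: "a \<in> C" "a \<notin> D" by blast
    have "inj_on (\<lambda>x. x + a) (C - D)" by (rule inj_onI) simp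
    moreover have "(\<lambda>x. x + a) ` (C - D) \<subseteq> D"
    proof
      fix y assume "y \<in> (\<lambda>x. x + a) ` (C - D)"
      then obtain x where x: "x \<in> C" "x \<notin> D" "y = x + a" by blast
      have n4: "\<not> 4 dvd wt x" "\<not> 4 dvd wt a" using x a unfolding D_def by auto
      obtain k where "card {i. x $ i = 1 \<and> a $ i = 1} = 2 * k" using orth[OF x(1) a(1)] by blast
      hence "wt (x + a) + 2 * (2 * k) = wt x + wt a" using wadd[of x a] by simp
      hence "4 dvd wt (x + a)" using n4 ev[OF x(1)] ev[OF a(1)] by (rule ar2)
      thus "y \<in> D" using addC x a unfolding D_def by blast
    qed
    ultimately have "card (C - D) \<le> card D" by (rule card_inj_on_le[OF _ _ finite_bitvec])
    moreover have "card C = card D + card (C - D)"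
    proof -
      have DC: "D \<subseteq> C" unfolding D_def by blast
      hence "card (C - D) = card C - card D" by (simp add: card_Diff_subset finite_bitvec)
      moreover have "card D \<le> card C" using DC by (simp add: card_mono finite_bitvec)
      ultimately show ?thesis by simp
    qed
    ultimately show ?thesis by simp
  qed
  have up: "2 * (\<Sum>x\<in>D. wt x) \<le> CARD(54) * card D" by (rule sum_wt_bound) (rule addD)
  have zD: "0 \<in> D" unfolding D_def wt_def using z by simp
  have "(\<Sum>x\<in>D - {0}. 28) \<le> (\<Sum>x\<in>D - {0}. wt x)"
  proof (rule sum_mono)
    fix x assume x: "x \<in> D - {0}"
    hence "26 \<le> wt x" "4 dvd wt x" using w26 unfolding D_def by auto
    thus "28 \<le> wt x" by (rule ar3)
  qed
  also have "\<dots> \<le> (\<Sum>x\<in>D. wt x)" by (rule sum_mono2) (auto simp: finite_bitvec)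
  finally have "28 * (card D - 1) \<le> (\<Sum>x\<in>D. wt x)" using zD finite_bitvec[of D] by simp
  hence "card D \<le> 28" using up zD by simp
  thus False using cardCD c64 by simp
qed

end
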